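(* Let $k$ be a field and $(\mathcal{C},\otimes_{\mathcal{C}},1_{\mathcal{C}})$ a small $k$-linear symmetric monoidal category. Let $M,N\in\mathrm{Psh}(\mathcal{C})$ and let $M_0\subset M$ be a sub-presheaf of vector spaces. Then there exists a sub-presheaf $M'\subset M$ with $M_0\subset M'$ such that the induced map $M'\otimes^{Day}N\to M\otimes^{Day}N$ is a monomorphism, and $\#(M')\le\max(\#(M_0),\#(\mathcal{C}),\aleph_0)$.
   Context: $\mathrm{Psh}(\mathcal{C})$ denotes the category of $k$-linear functors $\mathcal{C}^{op}\to \mathrm{Vect}_k$, with the Day convolution product $(F\otimes^{Day}G)(U)=\int^{X,Y}\mathcal{C}(U,X\otimes_{\mathcal{C}}Y)\otimes_k F(X)\otimes_k G(Y)$ (equivalently $\mathrm{colim}_{U\to X\otimes Y}F(X)\otimes G(Y)$). For a presheaf $F$, $\#(F)$ denotes the cardinality of $\coprod_{x\in\mathrm{Ob}\,\mathcal{C}}F(x)$, and $\#(\mathcal{C})$ the cardinality of the set of morphisms of $\mathcal{C}$. *)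

theory Defs
  imports Main
begin

text \<open>A small category with objects in 'o and morphisms in 'm, every hom-set
 Hom X Y a k-vector space, composition k-bilinear.  comp g f is g after f.\<close>

record ('o,'m,'k) lincat =
  Ob :: "'o set"
  Mor :: "'m set"
  dom :: "'m \<Rightarrow> 'o"
  cod :: "'m \<Rightarrow> 'o"
  cid :: "'o \<Rightarrow> 'm"
  comp :: "'m \<Rightarrow> 'm \<Rightarrow> 'm"
  hadd :: "'m \<Rightarrow> 'm \<Rightarrow> 'm"
  hscale :: "'k \<Rightarrow> 'm \<Rightarrow> 'm"
  hzero :: "'o \<Rightarrow> 'o \<Rightarrow> 'm"

definition Hom :: "('o,'m,'k,'z) lincat_scheme \<Rightarrow> 'o \<Rightarrow> 'o \<Rightarrow> 'm set" where
  "Hom C X Y = {f \<in> Mor C. dom C f = X \<and> cod C f = Y}"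

definition vs_on :: "'v set \<Rightarrow> ('v \<Rightarrow> 'v \<Rightarrow> 'v) \<Rightarrow> ('k::field \<Rightarrow> 'v \<Rightarrow> 'v) \<Rightarrow> 'v \<Rightarrow> bool" where
  "vs_on V add sc z \<longleftrightarrow>
     z \<in> V \<and>
     (\<forall>x\<in>V. \<forall>y\<in>V. add x y \<in> V) \<and>
     (\<forall>a. \<forall>x\<in>V. sc a x \<in> V) \<and>
     (\<forall>x\<in>V. \<forall>y\<in>V. \<forall>w\<in>V. add (add x y) w = add x (add y w)) \<and>
     (\<forall>x\<in>V. \<forall>y\<in>V. add x y = add y x) \<and>
     (\<forall>x\<in>V. add z x = x) \<and>
     (\<forall>x\<in>V. \<exists>y\<in>V. add x y = z) \<and>
     (\<forall>a. \<forall>x\<in>V. \<forall>y\<in>V. sc a (add x y) = add (sc a x) (sc a y)) \<and>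
     (\<forall>a b. \<forall>x\<in>V. sc (a + b) x = add (sc a x) (sc b x)) \<and>
     (\<forall>a b. \<forall>x\<in>V. sc (a * b) x = sc a (sc b x)) \<and>
     (\<forall>x\<in>V. sc 1 x = x)"

definition is_iso :: "('o,'m,'k,'z) lincat_scheme \<Rightarrow> 'o \<Rightarrow> 'o \<Rightarrow> 'm \<Rightarrow> bool" where
  "is_iso C X Y f \<longleftrightarrow> f \<in> Hom C X Y \<and>
     (\<exists>g\<in>Hom C Y X. comp C g f = cid C X \<and> comp C f g = cid C Y)"

definition klinear_category :: "('o,'m,'k::field,'z) lincat_scheme \<Rightarrow> bool" where
  "klinear_category C \<longleftrightarrow>
     (\<forall>f\<in>Mor C. dom C f \<in> Ob C \<and> cod C f \<in> Ob C) \<and>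
     (\<forall>X\<in>Ob C. cid C X \<in> Hom C X X) \<and>
     (\<forall>X\<in>Ob C. \<forall>Y\<in>Ob C. \<forall>Z\<in>Ob C. \<forall>f\<in>Hom C X Y. \<forall>g\<in>Hom C Y Z.
        comp C g f \<in> Hom C X Z) \<and>
     (\<forall>W\<in>Ob C. \<forall>X\<in>Ob C. \<forall>Y\<in>Ob C. \<forall>Z\<in>Ob C.
        \<forall>f\<in>Hom C W X. \<forall>g\<in>Hom C X Y. \<forall>h\<in>Hom C Y Z.
        comp C h (comp C g f) = comp C (comp C h g) f) \<and>
     (\<forall>X\<in>Ob C. \<forall>Y\<in>Ob C. \<forall>f\<in>Hom C X Y.
        comp C f (cid C X) = f \<and> comp C (cid C Y) f = f) \<and>
     (\<forall>X\<in>Ob C. \<forall>Y\<in>Ob C. vs_on (Hom C X Y) (hadd C) (hscale C) (hzero C X Y)) \<and>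
     (\<forall>X\<in>Ob C. \<forall>Y\<in>Ob C. \<forall>Z\<in>Ob C.
        \<forall>f\<in>Hom C X Y. \<forall>f'\<in>Hom C X Y. \<forall>g\<in>Hom C Y Z. \<forall>g'\<in>Hom C Y Z. \<forall>a.
        comp C (hadd C g g') f = hadd C (comp C g f) (comp C g' f) \<and>
        comp C g (hadd C f f') = hadd C (comp C g f) (comp C g f') \<and>
        comp C (hscale C a g) f = hscale C a (comp C g f) \<and>
        comp C g (hscale C a f) = hscale C a (comp C g f))"

record ('o,'m,'k) smcat = "('o,'m,'k) lincat" +
  tob :: "'o \<Rightarrow> 'o \<Rightarrow> 'o"
  tmor :: "'m \<Rightarrow> 'm \<Rightarrow> 'm"
  unit_ob :: "'o"
  assoc :: "'o \<Rightarrow> 'o \<Rightarrow> 'o \<Rightarrow> 'm"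
  lunit :: "'o \<Rightarrow> 'm"
  runit :: "'o \<Rightarrow> 'm"
  braid :: "'o \<Rightarrow> 'o \<Rightarrow> 'm"

definition klinear_symmetric_monoidal :: "('o,'m,'k::field) smcat \<Rightarrow> bool" where
  "klinear_symmetric_monoidal C \<longleftrightarrow>
   (let T = tob C; t = tmor C; I = unit_ob C; a = assoc C; l = lunit C;
        r = runit C; s = braid C; c = comp C; i = cid C in
     klinear_category C \<and>
     I \<in> Ob C \<and>
     (\<forall>X\<in>Ob C. \<forall>Y\<in>Ob C. T X Y \<in> Ob C) \<and>
     \<comment> \<open>tensor is a k-bilinear bifunctor\<close>
     (\<forall>X\<in>Ob C. \<forall>X'\<in>Ob C. \<forall>Y\<in>Ob C. \<forall>Y'\<in>Ob C. \<forall>f\<in>Hom C X X'. \<forall>g\<in>Hom C Y Y'.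
        t f g \<in> Hom C (T X Y) (T X' Y')) \<and>
     (\<forall>X\<in>Ob C. \<forall>Y\<in>Ob C. t (i X) (i Y) = i (T X Y)) \<and>
     (\<forall>X\<in>Ob C. \<forall>X'\<in>Ob C. \<forall>X''\<in>Ob C. \<forall>Y\<in>Ob C. \<forall>Y'\<in>Ob C. \<forall>Y''\<in>Ob C.
        \<forall>f\<in>Hom C X X'. \<forall>f'\<in>Hom C X' X''. \<forall>g\<in>Hom C Y Y'. \<forall>g'\<in>Hom C Y' Y''.
        t (c f' f) (c g' g) = c (t f' g') (t f g)) \<and>
     (\<forall>X\<in>Ob C. \<forall>X'\<in>Ob C. \<forall>Y\<in>Ob C. \<forall>Y'\<in>Ob C.
        \<forall>f\<in>Hom C X X'. \<forall>f'\<in>Hom C X X'. \<forall>g\<in>Hom C Y Y'. \<forall>g'\<in>Hom C Y Y'. \<forall>k.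
        t (hadd C f f') g = hadd C (t f g) (t f' g) \<and>
        t f (hadd C g g') = hadd C (t f g) (t f g') \<and>
        t (hscale C k f) g = hscale C k (t f g) \<and>
        t f (hscale C k g) = hscale C k (t f g)) \<and>
     \<comment> \<open>associator: natural isomorphism\<close>
     (\<forall>X\<in>Ob C. \<forall>Y\<in>Ob C. \<forall>Z\<in>Ob C. is_iso C (T (T X Y) Z) (T X (T Y Z)) (a X Y Z)) \<and>
     (\<forall>X\<in>Ob C. \<forall>X'\<in>Ob C. \<forall>Y\<in>Ob C. \<forall>Y'\<in>Ob C. \<forall>Z\<in>Ob C. \<forall>Z'\<in>Ob C.
        \<forall>f\<in>Hom C X X'. \<forall>g\<in>Hom C Y Y'. \<forall>h\<in>Hom C Z Z'.
        c (a X' Y' Z') (t (t f g) h) = c (t f (t g h)) (a X Y Z)) \<and>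
     \<comment> \<open>unitors: natural isomorphisms\<close>
     (\<forall>X\<in>Ob C. is_iso C (T I X) X (l X) \<and> is_iso C (T X I) X (r X)) \<and>
     (\<forall>X\<in>Ob C. \<forall>X'\<in>Ob C. \<forall>f\<in>Hom C X X'.
        c f (l X) = c (l X') (t (i I) f) \<and> c f (r X) = c (r X') (t f (i I))) \<and>
     \<comment> \<open>pentagon and triangle\<close>
     (\<forall>W\<in>Ob C. \<forall>X\<in>Ob C. \<forall>Y\<in>Ob C. \<forall>Z\<in>Ob C.
        c (t (i W) (a X Y Z)) (c (a W (T X Y) Z) (t (a W X Y) (i Z)))
          = c (a W X (T Y Z)) (a (T W X) Y Z)) \<and>
     (\<forall>X\<in>Ob C. \<forall>Y\<in>Ob C. c (t (i X) (l Y)) (a X I Y) = t (r X) (i Y)) \<and>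
     \<comment> \<open>symmetry: natural braiding, self-inverse, hexagon\<close>
     (\<forall>X\<in>Ob C. \<forall>Y\<in>Ob C. s X Y \<in> Hom C (T X Y) (T Y X) \<and> c (s Y X) (s X Y) = i (T X Y)) \<and>
     (\<forall>X\<in>Ob C. \<forall>X'\<in>Ob C. \<forall>Y\<in>Ob C. \<forall>Y'\<in>Ob C. \<forall>f\<in>Hom C X X'. \<forall>g\<in>Hom C Y Y'.
        c (s X' Y') (t f g) = c (t g f) (s X Y)) \<and>
     (\<forall>X\<in>Ob C. \<forall>Y\<in>Ob C. \<forall>Z\<in>Ob C.
        c (a Y Z X) (c (s X (T Y Z)) (a X Y Z))
          = c (t (i Y) (s X Z)) (c (a Y X Z) (t (s X Y) (i Z)))))"

text \<open>carr X is the vector space F(X); act f : F(Y) \<rightarrow> F(X) for f : X \<rightarrow> Y.\<close>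
record ('o,'m,'v,'k) psh =
  carr :: "'o \<Rightarrow> 'v set"
  padd :: "'o \<Rightarrow> 'v \<Rightarrow> 'v \<Rightarrow> 'v"
  pscale :: "'o \<Rightarrow> 'k \<Rightarrow> 'v \<Rightarrow> 'v"
  pzero :: "'o \<Rightarrow> 'v"
  act :: "'m \<Rightarrow> 'v \<Rightarrow> 'v"

definition presheaf :: "('o,'m,'k::field,'z) lincat_scheme \<Rightarrow> ('o,'m,'v,'k) psh \<Rightarrow> bool" where
  "presheaf C F \<longleftrightarrow>
     (\<forall>X\<in>Ob C. vs_on (carr F X) (padd F X) (pscale F X) (pzero F X)) \<and>
     (\<forall>X\<in>Ob C. \<forall>Y\<in>Ob C. \<forall>f\<in>Hom C X Y. \<forall>m\<in>carr F Y. \<forall>m'\<in>carr F Y. \<forall>k.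
        act F f m \<in> carr F X \<and>
        act F f (padd F Y m m') = padd F X (act F f m) (act F f m') \<and>
        act F f (pscale F Y k m) = pscale F X k (act F f m)) \<and>
     (\<forall>X\<in>Ob C. \<forall>m\<in>carr F X. act F (cid C X) m = m) \<and>
     (\<forall>X\<in>Ob C. \<forall>Y\<in>Ob C. \<forall>Z\<in>Ob C. \<forall>f\<in>Hom C X Y. \<forall>g\<in>Hom C Y Z. \<forall>m\<in>carr F Z.
        act F (comp C g f) m = act F f (act F g m)) \<and>
     (\<forall>X\<in>Ob C. \<forall>Y\<in>Ob C. \<forall>f\<in>Hom C X Y. \<forall>f'\<in>Hom C X Y. \<forall>m\<in>carr F Y. \<forall>k.
        act F (hadd C f f') m = padd F X (act F f m) (act F f' m) \<and>
        act F (hscale C k f) m = pscale F X k (act F f m))"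

text \<open>A sub-presheaf of vector spaces of F, given by its family of carriers
  (with the operations inherited from F).\<close>
definition sub_presheaf :: "('o,'m,'k::field,'z) lincat_scheme \<Rightarrow> ('o,'m,'v,'k) psh \<Rightarrow> ('o \<Rightarrow> 'v set) \<Rightarrow> bool" where
  "sub_presheaf C F S \<longleftrightarrow>
     (\<forall>X\<in>Ob C. S X \<subseteq> carr F X \<and> pzero F X \<in> S X \<and>
        (\<forall>m\<in>S X. \<forall>m'\<in>S X. padd F X m m' \<in> S X) \<and>
        (\<forall>k. \<forall>m\<in>S X. pscale F X k m \<in> S X)) \<and>
     (\<forall>X\<in>Ob C. \<forall>Y\<in>Ob C. \<forall>f\<in>Hom C X Y. \<forall>m\<in>S Y. act F f m \<in> S X)"

text \<open>(S \<otimes>Day N)(U) = colim over U \<rightarrow> X\<otimes>Y of S(X) \<otimes>k N(Y), realised as the free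
 k-vector space on generators (X,Y,f,m,n) with f : U \<rightarrow> X\<otimes>Y, m \<in> S(X), n \<in> N(Y),
 modulo the k-trilinearity relations and the coend (dinaturality) relations.\<close>

type_synonym ('o,'m,'v,'w) dgen = "'o \<times> 'o \<times> 'm \<times> 'v \<times> 'w"

definition delta :: "'g \<Rightarrow> 'g \<Rightarrow> 'k::field" where
  "delta g = (\<lambda>h. if h = g then 1 else 0)"

definition day_gen :: "('o,'m,'k::field) smcat \<Rightarrow> ('o \<Rightarrow> 'v set) \<Rightarrow> ('o,'m,'w,'k) psh
     \<Rightarrow> 'o \<Rightarrow> ('o,'m,'v,'w) dgen \<Rightarrow> bool" where
  "day_gen C S N U g \<longleftrightarrow> (case g of (X,Y,f,m,n) \<Rightarrow>
     X \<in> Ob C \<and> Y \<in> Ob C \<and> f \<in> Hom C U (tob C X Y) \<and> m \<in> S X \<and> n \<in> carr N Y)"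

definition day_free :: "('o,'m,'k::field) smcat \<Rightarrow> ('o \<Rightarrow> 'v set) \<Rightarrow> ('o,'m,'w,'k) psh
     \<Rightarrow> 'o \<Rightarrow> (('o,'m,'v,'w) dgen \<Rightarrow> 'k) set" where
  "day_free C S N U = {c. finite {g. c g \<noteq> 0} \<and> (\<forall>g. c g \<noteq> 0 \<longrightarrow> day_gen C S N U g)}"

definition day_rels :: "('o,'m,'k::field) smcat \<Rightarrow> ('o,'m,'v,'k) psh \<Rightarrow> ('o \<Rightarrow> 'v set)
     \<Rightarrow> ('o,'m,'w,'k) psh \<Rightarrow> 'o \<Rightarrow> (('o,'m,'v,'w) dgen \<Rightarrow> 'k) set" where
  "day_rels C M S N U =
     \<comment> \<open>linearity in f\<close>
     {(\<lambda>h. delta (X,Y,hadd C f f',m,n) h - delta (X,Y,f,m,n) h - delta (X,Y,f',m,n) h)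
        | X Y f f' m n. day_gen C S N U (X,Y,f,m,n) \<and> f' \<in> Hom C U (tob C X Y)} \<union>
     {(\<lambda>h. delta (X,Y,hscale C a f,m,n) h - a * delta (X,Y,f,m,n) h)
        | X Y f m n a. day_gen C S N U (X,Y,f,m,n)} \<union>
     \<comment> \<open>linearity in m\<close>
     {(\<lambda>h. delta (X,Y,f,padd M X m m',n) h - delta (X,Y,f,m,n) h - delta (X,Y,f,m',n) h)
        | X Y f m m' n. day_gen C S N U (X,Y,f,m,n) \<and> m' \<in> S X} \<union>
     {(\<lambda>h. delta (X,Y,f,pscale M X a m,n) h - a * delta (X,Y,f,m,n) h)
        | X Y f m n a. day_gen C S N U (X,Y,f,m,n)} \<union>
     \<comment> \<open>linearity in n\<close>
     {(\<lambda>h. delta (X,Y,f,m,padd N Y n n') h - delta (X,Y,f,m,n) h - delta (X,Y,f,m,n') h)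
        | X Y f m n n'. day_gen C S N U (X,Y,f,m,n) \<and> n' \<in> carr N Y} \<union>
     {(\<lambda>h. delta (X,Y,f,m,pscale N Y a n) h - a * delta (X,Y,f,m,n) h)
        | X Y f m n a. day_gen C S N U (X,Y,f,m,n)} \<union>
     \<comment> \<open>coend relations: ((a\<otimes>b)\<circ>f, m', n') ~ (f, M(a) m', N(b) n')\<close>
     {(\<lambda>h. delta (X',Y',comp C (tmor C a b) f,m',n') h - delta (X,Y,f,act M a m',act N b n') h)
        | X Y X' Y' a b f m' n'. X \<in> Ob C \<and> Y \<in> Ob C \<and> X' \<in> Ob C \<and> Y' \<in> Ob C \<and>
          a \<in> Hom C X X' \<and> b \<in> Hom C Y Y' \<and> f \<in> Hom C U (tob C X Y) \<and>
          m' \<in> S X' \<and> n' \<in> carr N Y'}"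

inductive_set day_span :: "('o,'m,'k::field) smcat \<Rightarrow> ('o,'m,'v,'k) psh \<Rightarrow> ('o \<Rightarrow> 'v set)
     \<Rightarrow> ('o,'m,'w,'k) psh \<Rightarrow> 'o \<Rightarrow> (('o,'m,'v,'w) dgen \<Rightarrow> 'k) set"
  for C M S N U where
  zero: "(\<lambda>_. 0) \<in> day_span C M S N U"
| rel: "r \<in> day_rels C M S N U \<Longrightarrow> r \<in> day_span C M S N U"
| add: "x \<in> day_span C M S N U \<Longrightarrow> y \<in> day_span C M S N U \<Longrightarrow> (\<lambda>g. x g + y g) \<in> day_span C M S N U"
| scale: "x \<in> day_span C M S N U \<Longrightarrow> (\<lambda>g. a * x g) \<in> day_span C M S N U"

text \<open>The induced map (S\<otimes>Day N)(U) \<rightarrow> (M\<otimes>Day N)(U), [c] \<mapsto> [c], is injective iff every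
 formal combination over S-generators lying in the relation space for M already lies
 in the relation space for S.  A morphism of presheaves of vector spaces is a
 monomorphism iff it is injective in every component.\<close>
definition day_incl_mono :: "('o,'m,'k::field) smcat \<Rightarrow> ('o,'m,'v,'k) psh \<Rightarrow> ('o \<Rightarrow> 'v set)
     \<Rightarrow> ('o,'m,'w,'k) psh \<Rightarrow> bool" where
  "day_incl_mono C M S N \<longleftrightarrow>
     (\<forall>U\<in>Ob C. \<forall>c\<in>day_free C S N U.
        c \<in> day_span C M (carr M) N U \<longrightarrow> c \<in> day_span C M S N U)"

text \<open>#(S) = cardinality of the disjoint union of the S(X).\<close>
definition psh_size :: "('o,'m,'k,'z) lincat_scheme \<Rightarrow> ('o \<Rightarrow> 'v set) \<Rightarrow> ('o \<times> 'v) set" where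
  "psh_size C S = (SIGMA X:Ob C. S X)"

end

theory Submission
  imports Defs
begin


definition fs :: "('g \<Rightarrow> 'k::field) \<Rightarrow> bool" where
  "fs c \<longleftrightarrow> finite {g. c g \<noteq> 0}"

definition push :: "('g \<Rightarrow> 'h) \<Rightarrow> ('g \<Rightarrow> 'k::field) \<Rightarrow> 'h \<Rightarrow> 'k" where
  "push \<phi> c h = sum c {g. c g \<noteq> 0 \<and> \<phi> g = h}"

lemma push_eq:
  assumes "finite T" "{g. c g \<noteq> 0} \<subseteq> T"
  shows "push \<phi> c h = sum c {g\<in>T. \<phi> g = h}"
  unfolding push_def
  by (rule sum.mono_neutral_left) (use assms in auto)

lemma push_add:
  assumes "fs c" "fs d"
  shows "push \<phi> (\<lambda>g. c g + d g) = (\<lambda>h. push \<phi> c h + push \<phi> d h)"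
proof
  fix h
  let ?T = "{g. c g \<noteq> 0} \<union> {g. d g \<noteq> 0}"
  have f: "finite ?T" using assms by (auto simp: fs_def)
  have "push \<phi> (\<lambda>g. c g + d g) h = (\<Sum>g\<in>{g\<in>?T. \<phi> g = h}. c g + d g)"
    by (rule push_eq[OF f]) auto
  also have "\<dots> = push \<phi> c h + push \<phi> d h"
    by (simp add: sum.distrib push_eq[OF f])
  finally show "push \<phi> (\<lambda>g. c g + d g) h = push \<phi> c h + push \<phi> d h" .
qed

lemma push_scale:
  assumes "fs c"
  shows "push \<phi> (\<lambda>g. a * c g) = (\<lambda>h. a * push \<phi> c h)"
proof
  fix h
  let ?T = "{g. c g \<noteq> 0}"
  have f: "finite ?T" using assms by (auto simp: fs_def)
  have "push \<phi> (\<lambda>g. a * c g) h = (\<Sum>g\<in>{g\<in>?T. \<phi> g = h}. a * c g)"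
    by (rule push_eq[OF f]) auto
  also have "\<dots> = a * push \<phi> c h"
    by (simp add: sum_distrib_left push_eq[OF f])
  finally show "push \<phi> (\<lambda>g. a * c g) h = a * push \<phi> c h" .
qed

lemma push_zero: "push \<phi> (\<lambda>_. 0::'k::field) = (\<lambda>_. 0)"
  by (auto simp: push_def)

lemma fs_delta: "fs (delta g :: _ \<Rightarrow> 'k::field)"
  unfolding fs_def delta_def by (rule finite_subset[of _ "{g}"]) auto

lemma fs_add: "fs c \<Longrightarrow> fs d \<Longrightarrow> fs (\<lambda>g. c g + d g)"
  unfolding fs_def by (rule finite_subset[of _ "{g. c g \<noteq> 0} \<union> {g. d g \<noteq> 0}"]) auto

lemma fs_scale: "fs c \<Longrightarrow> fs (\<lambda>g. a * c g)"
  unfolding fs_def by (rule finite_subset[of _ "{g. c g \<noteq> 0}"]) auto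

lemma fs_diff: "fs c \<Longrightarrow> fs d \<Longrightarrow> fs (\<lambda>g. c g - d g)"
  unfolding fs_def by (rule finite_subset[of _ "{g. c g \<noteq> 0} \<union> {g. d g \<noteq> 0}"]) auto

lemma push_diff:
  assumes "fs c" "fs d"
  shows "push \<phi> (\<lambda>g. c g - d g) = (\<lambda>h. push \<phi> c h - push \<phi> d h)"
proof
  fix h
  let ?T = "{g. c g \<noteq> 0} \<union> {g. d g \<noteq> 0}"
  have f: "finite ?T" using assms by (auto simp: fs_def)
  have "push \<phi> (\<lambda>g. c g - d g) h = (\<Sum>g\<in>{g\<in>?T. \<phi> g = h}. c g - d g)"
    by (rule push_eq[OF f]) auto
  also have "\<dots> = push \<phi> c h - push \<phi> d h"
    by (simp add: sum_subtractf push_eq[OF f])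
  finally show "push \<phi> (\<lambda>g. c g - d g) h = push \<phi> c h - push \<phi> d h" .
qed

lemma push_delta: "push \<phi> (delta g :: _ \<Rightarrow> 'k::field) = delta (\<phi> g)"
proof
  fix h
  have "push \<phi> (delta g :: _ \<Rightarrow> 'k) h = (\<Sum>x\<in>{x\<in>{g}. \<phi> x = h}. (delta g x :: 'k))"
    by (rule push_eq) (auto simp: delta_def)
  moreover have "{x\<in>{g}. \<phi> x = h} = (if \<phi> g = h then {g} else {})" by auto
  ultimately show "push \<phi> (delta g :: _ \<Rightarrow> 'k) h = delta (\<phi> g) h"
    by (simp add: delta_def)
qed

lemma push_id_on:
  assumes "\<And>g. c g \<noteq> 0 \<Longrightarrow> \<phi> g = g"
  shows "push \<phi> (c :: _ \<Rightarrow> 'k::field) = c"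
proof
  fix h
  have "{g. c g \<noteq> 0 \<and> \<phi> g = h} = (if c h = 0 then {} else {h})" using assms by auto
  then have "push \<phi> c h = sum c (if c h = 0 then {} else {h})" unfolding push_def by simp
  then show "push \<phi> c h = c h" by (cases "c h = 0") auto
qed

inductive_set lspan :: "('g \<Rightarrow> 'k::field) set \<Rightarrow> ('g \<Rightarrow> 'k) set" for R where
  zero: "(\<lambda>_. 0) \<in> lspan R"
| rel: "r \<in> R \<Longrightarrow> r \<in> lspan R"
| add: "x \<in> lspan R \<Longrightarrow> y \<in> lspan R \<Longrightarrow> (\<lambda>g. x g + y g) \<in> lspan R"
| scale: "x \<in> lspan R \<Longrightarrow> (\<lambda>g. a * x g) \<in> lspan R"

lemma lspan_mono: "x \<in> lspan R \<Longrightarrow> R \<subseteq> R' \<Longrightarrow> x \<in> lspan R'"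
  by (induction rule: lspan.induct) (auto intro: lspan.intros)

lemma lspan_finite: "x \<in> lspan R \<Longrightarrow> \<exists>R'. finite R' \<and> R' \<subseteq> R \<and> x \<in> lspan R'"
proof (induction rule: lspan.induct)
  case zero then show ?case by (auto intro: lspan.intros)
next
  case (rel r) then show ?case by (intro exI[of _ "{r}"]) (auto intro: lspan.intros)
next
  case (add x y)
  then obtain R1 R2 where "finite R1" "R1 \<subseteq> R" "x \<in> lspan R1" "finite R2" "R2 \<subseteq> R" "y \<in> lspan R2" by blast
  then show ?case
    by (intro exI[of _ "R1 \<union> R2"]) (auto intro: lspan.add lspan_mono)
next
  case (scale x a) then show ?case by (auto intro: lspan.intros)
qed

lemma lspan_push:
  assumes "x \<in> lspan R" "\<And>r. r \<in> R \<Longrightarrow> fs r \<and> push \<phi> r \<in> lspan R2"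
  shows "fs x \<and> push \<phi> x \<in> lspan R2"
  using assms
proof (induction rule: lspan.induct)
  case zero then show ?case by (auto simp: push_zero fs_def intro: lspan.intros)
next
  case (rel r) then show ?case by auto
next
  case (add x y) then show ?case by (auto simp: push_add fs_add intro: lspan.intros)
next
  case (scale x a) then show ?case by (auto simp: push_scale fs_scale intro: lspan.intros)
qed

lemma day_span_lspan: "x \<in> day_span C M S N U \<Longrightarrow> x \<in> lspan (day_rels C M S N U)"
  by (induction rule: day_span.induct) (auto intro: lspan.intros)

lemma lspan_day_span: "x \<in> lspan (day_rels C M S N U) \<Longrightarrow> x \<in> day_span C M S N U"
  by (induction rule: lspan.induct) (auto intro: day_span.intros)


datatype ('o,'m,'v,'w,'k) desc =
  DF 'o 'o 'm 'm 'v 'w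
| DFS 'o 'o 'm 'v 'w 'k
| DM 'o 'o 'm 'v 'v 'w
| DMS 'o 'o 'm 'v 'w 'k
| DN 'o 'o 'm 'v 'w 'w
| DNS 'o 'o 'm 'v 'w 'k
| DC 'o 'o 'o 'o 'm 'm 'm 'v 'w

fun rel_of :: "('o,'m,'k::field) smcat \<Rightarrow> ('o,'m,'v,'k) psh \<Rightarrow> ('o,'m,'w,'k) psh
   \<Rightarrow> ('o,'m,'v,'w,'k) desc \<Rightarrow> ('o,'m,'v,'w) dgen \<Rightarrow> 'k" where
  "rel_of C M N (DF X Y f f' m n) = (\<lambda>h. delta (X,Y,hadd C f f',m,n) h - delta (X,Y,f,m,n) h - delta (X,Y,f',m,n) h)"
| "rel_of C M N (DFS X Y f m n a) = (\<lambda>h. delta (X,Y,hscale C a f,m,n) h - a * delta (X,Y,f,m,n) h)"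
| "rel_of C M N (DM X Y f m m' n) = (\<lambda>h. delta (X,Y,f,padd M X m m',n) h - delta (X,Y,f,m,n) h - delta (X,Y,f,m',n) h)"
| "rel_of C M N (DMS X Y f m n a) = (\<lambda>h. delta (X,Y,f,pscale M X a m,n) h - a * delta (X,Y,f,m,n) h)"
| "rel_of C M N (DN X Y f m n n') = (\<lambda>h. delta (X,Y,f,m,padd N Y n n') h - delta (X,Y,f,m,n) h - delta (X,Y,f,m,n') h)"
| "rel_of C M N (DNS X Y f m n a) = (\<lambda>h. delta (X,Y,f,m,pscale N Y a n) h - a * delta (X,Y,f,m,n) h)"
| "rel_of C M N (DC X Y X' Y' a b f m' n') = (\<lambda>h. delta (X',Y',comp C (tmor C a b) f,m',n') h - delta (X,Y,f,act M a m',act N b n') h)"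

fun valid :: "('o,'m,'k::field) smcat \<Rightarrow> ('o \<Rightarrow> 'v set) \<Rightarrow> ('o,'m,'w,'k) psh \<Rightarrow> 'o
   \<Rightarrow> ('o,'m,'v,'w,'k) desc \<Rightarrow> bool" where
  "valid C S N U (DF X Y f f' m n) = (day_gen C S N U (X,Y,f,m,n) \<and> f' \<in> Hom C U (tob C X Y))"
| "valid C S N U (DFS X Y f m n a) = day_gen C S N U (X,Y,f,m,n)"
| "valid C S N U (DM X Y f m m' n) = (day_gen C S N U (X,Y,f,m,n) \<and> m' \<in> S X)"
| "valid C S N U (DMS X Y f m n a) = day_gen C S N U (X,Y,f,m,n)"
| "valid C S N U (DN X Y f m n n') = (day_gen C S N U (X,Y,f,m,n) \<and> n' \<in> carr N Y)"
| "valid C S N U (DNS X Y f m n a) = day_gen C S N U (X,Y,f,m,n)"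
| "valid C S N U (DC X Y X' Y' a b f m' n') = (X \<in> Ob C \<and> Y \<in> Ob C \<and> X' \<in> Ob C \<and> Y' \<in> Ob C \<and>
          a \<in> Hom C X X' \<and> b \<in> Hom C Y Y' \<and> f \<in> Hom C U (tob C X Y) \<and>
          m' \<in> S X' \<and> n' \<in> carr N Y')"

lemma day_rels_desc:
  "r \<in> day_rels C M S N U \<Longrightarrow> \<exists>d. valid C S N U d \<and> r = rel_of C M N d"
  unfolding day_rels_def
  apply (elim UnE CollectE exE conjE)
  subgoal for X Y f f' m n by (rule exI[of _ "DF X Y f f' m n"]) simp
  subgoal for X Y f m n a by (rule exI[of _ "DFS X Y f m n a"]) simp
  subgoal for X Y f m m' n by (rule exI[of _ "DM X Y f m m' n"]) simp
  subgoal for X Y f m n a by (rule exI[of _ "DMS X Y f m n a"]) simp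
  subgoal for X Y f m n n' by (rule exI[of _ "DN X Y f m n n'"]) simp
  subgoal for X Y f m n a by (rule exI[of _ "DNS X Y f m n a"]) simp
  subgoal for X Y X' Y' a b f m' n' by (rule exI[of _ "DC X Y X' Y' a b f m' n'"]) simp
  done

lemma desc_day_rels:
  "valid C S N U d \<Longrightarrow> rel_of C M N d \<in> day_rels C M S N U"
  unfolding day_rels_def
  apply (induct d)
  subgoal
   apply (simp only: valid.simps rel_of.simps)
   apply (rule UnI1, rule UnI1, rule UnI1, rule UnI1, rule UnI1, rule UnI1)
   apply (simp only: mem_Collect_eq, intro exI conjI, rule refl)
   by simp_all
  subgoal
   apply (simp only: valid.simps rel_of.simps)
   apply (rule UnI1, rule UnI1, rule UnI1, rule UnI1, rule UnI1, rule UnI2)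
   apply (simp only: mem_Collect_eq, intro exI conjI, rule refl)
   by simp_all
  subgoal
   apply (simp only: valid.simps rel_of.simps)
   apply (rule UnI1, rule UnI1, rule UnI1, rule UnI1, rule UnI2)
   apply (simp only: mem_Collect_eq, intro exI conjI, rule refl)
   by simp_all
  subgoal
   apply (simp only: valid.simps rel_of.simps)
   apply (rule UnI1, rule UnI1, rule UnI1, rule UnI2)
   apply (simp only: mem_Collect_eq, intro exI conjI, rule refl)
   by simp_all
  subgoal
   apply (simp only: valid.simps rel_of.simps)
   apply (rule UnI1, rule UnI1, rule UnI2)
   apply (simp only: mem_Collect_eq, intro exI conjI, rule refl)
   by simp_all
  subgoal
   apply (simp only: valid.simps rel_of.simps)
   apply (rule UnI1, rule UnI2)
   apply (simp only: mem_Collect_eq, intro exI conjI, rule refl)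
   by simp_all
  subgoal
   apply (simp only: valid.simps rel_of.simps)
   apply (rule UnI2)
   apply (simp only: mem_Collect_eq, intro exI conjI, rule refl)
   by simp_all
  done

lemma fs_rel_of: "fs (rel_of C M N d)"
  by (cases d) (simp_all add: fs_diff fs_delta fs_scale)

fun mapd :: "('o \<Rightarrow> 'v \<Rightarrow> 'v) \<Rightarrow> ('o,'m,'v,'w,'k) desc \<Rightarrow> ('o,'m,'v,'w,'k) desc" where
  "mapd \<sigma> (DF X Y f f' m n) = DF X Y f f' (\<sigma> X m) n"
| "mapd \<sigma> (DFS X Y f m n a) = DFS X Y f (\<sigma> X m) n a"
| "mapd \<sigma> (DM X Y f m m' n) = DM X Y f (\<sigma> X m) (\<sigma> X m') n"
| "mapd \<sigma> (DMS X Y f m n a) = DMS X Y f (\<sigma> X m) n a"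
| "mapd \<sigma> (DN X Y f m n n') = DN X Y f (\<sigma> X m) n n'"
| "mapd \<sigma> (DNS X Y f m n a) = DNS X Y f (\<sigma> X m) n a"
| "mapd \<sigma> (DC X Y X' Y' a b f m' n') = DC X Y X' Y' a b f (\<sigma> X' m') n'"

fun elems :: "('o,'m,'v,'k) psh \<Rightarrow> ('o,'m,'v,'w,'k) desc \<Rightarrow> ('o \<times> 'v) set" where
  "elems M (DF X Y f f' m n) = {(X,m)}"
| "elems M (DFS X Y f m n a) = {(X,m)}"
| "elems M (DM X Y f m m' n) = {(X,m),(X,m'),(X,padd M X m m')}"
| "elems M (DMS X Y f m n a) = {(X,m),(X,pscale M X a m)}"
| "elems M (DN X Y f m n n') = {(X,m)}"
| "elems M (DNS X Y f m n a) = {(X,m)}"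
| "elems M (DC X Y X' Y' a b f m' n') = {(X',m'),(X,act M a m')}"

definition phi :: "('o \<Rightarrow> 'v \<Rightarrow> 'v) \<Rightarrow> ('o,'m,'v,'w) dgen \<Rightarrow> ('o,'m,'v,'w) dgen" where
  "phi \<sigma> = (\<lambda>(X,Y,f,m,n). (X,Y,f,\<sigma> X m,n))"

lemma push_rel_of:
  assumes "\<And>X Y f m m' n. d = DM X Y f m m' n \<Longrightarrow> \<sigma> X (padd M X m m') = padd M X (\<sigma> X m) (\<sigma> X m')"
    and "\<And>X Y f m n a. d = DMS X Y f m n a \<Longrightarrow> \<sigma> X (pscale M X a m) = pscale M X a (\<sigma> X m)"
    and "\<And>X Y X' Y' a b f m' n'. d = DC X Y X' Y' a b f m' n' \<Longrightarrow> \<sigma> X (act M a m') = act M a (\<sigma> X' m')"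
  shows "push (phi \<sigma>) (rel_of C M N d) = rel_of C M N (mapd \<sigma> d)"
  using assms
  by (cases d) (simp_all add: push_diff push_scale fs_diff fs_delta fs_scale push_delta phi_def)

lemma valid_mapd:
  assumes "valid C S N U d" "\<And>X m. (X,m) \<in> elems M d \<Longrightarrow> \<sigma> X m \<in> S' X"
  shows "valid C S' N U (mapd \<sigma> d)"
  using assms by (cases d) (auto simp: day_gen_def)


type_synonym ('o,'m,'v) sys = "'o list \<times> 'v option list \<times> (nat\<times>nat\<times>nat) list \<times> ('m\<times>nat\<times>nat) list"

definition realizes :: "('o,'m,'k::field,'z) lincat_scheme \<Rightarrow> ('o,'m,'v,'k) psh \<Rightarrow> ('o,'m,'v) sys \<Rightarrow> 'v list \<Rightarrow> bool" where
  "realizes C M \<tau> vs \<longleftrightarrow> (case \<tau> of (objs, params, adds, acts) \<Rightarrow>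
     length vs = length objs \<and> length params = length objs \<and>
     (\<forall>i<length objs. objs!i \<in> Ob C \<and> vs!i \<in> carr M (objs!i) \<and> (\<forall>v. params!i = Some v \<longrightarrow> vs!i = v)) \<and>
     (\<forall>(i,j,l)\<in>set adds. i < length objs \<and> j < length objs \<and> l < length objs \<and>
        objs!j = objs!i \<and> objs!l = objs!i \<and> padd M (objs!i) (vs!i) (vs!j) = vs!l) \<and>
     (\<forall>(f,i,l)\<in>set acts. i < length objs \<and> l < length objs \<and> f \<in> Hom C (objs!l) (objs!i) \<and>
        act M f (vs!i) = vs!l))"

definition types_over :: "('o,'m,'k,'z) lincat_scheme \<Rightarrow> ('o \<Rightarrow> 'v set) \<Rightarrow> ('o,'m,'v) sys set" where
  "types_over C A = {(objs, params, adds, acts). set objs \<subseteq> Ob C \<and>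
      set params \<subseteq> insert None (Some ` (\<Union>X\<in>Ob C. A X)) \<and> set acts \<subseteq> Mor C \<times> UNIV}"

definition step :: "('o,'m,'k::field,'z) lincat_scheme \<Rightarrow> ('o,'m,'v,'k) psh \<Rightarrow> ('o \<Rightarrow> 'v set) \<Rightarrow> 'o \<Rightarrow> 'v set" where
  "step C M A = (\<lambda>X. A X \<union> {v. \<exists>\<tau>\<in>types_over C A. (\<exists>es. realizes C M \<tau> es) \<and>
      (\<exists>i<length (fst \<tau>). fst \<tau> ! i = X \<and> (SOME es. realizes C M \<tau> es) ! i = v)})"

primrec chain :: "('o,'m,'k::field,'z) lincat_scheme \<Rightarrow> ('o,'m,'v,'k) psh \<Rightarrow> ('o \<Rightarrow> 'v set) \<Rightarrow> nat \<Rightarrow> 'o \<Rightarrow> 'v set" where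
  "chain C M M0 0 = M0"
| "chain C M M0 (Suc n) = step C M (chain C M M0 n)"

definition Mp :: "('o,'m,'k::field,'z) lincat_scheme \<Rightarrow> ('o,'m,'v,'k) psh \<Rightarrow> ('o \<Rightarrow> 'v set) \<Rightarrow> 'o \<Rightarrow> 'v set" where
  "Mp C M M0 = (\<lambda>X. \<Union>n. chain C M M0 n X)"

lemma realizes_carr:
  "realizes C M \<tau> es \<Longrightarrow> i < length (fst \<tau>) \<Longrightarrow> es!i \<in> carr M (fst \<tau> ! i)"
  by (cases \<tau>) (simp add: realizes_def)

lemma chain_mono: "n \<le> n' \<Longrightarrow> chain C M M0 n X \<subseteq> chain C M M0 n' X"
proof (induction n' rule: dec_induct)
  case base then show ?case by simp
next
  case (step k) then show ?case by (auto simp: step_def)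
qed

lemma chain_Mp: "chain C M M0 n X \<subseteq> Mp C M M0 X"
  unfolding Mp_def by blast

lemma chain_carr:
  assumes "\<forall>X\<in>Ob C. M0 X \<subseteq> carr M X" "X \<in> Ob C"
  shows "chain C M M0 n X \<subseteq> carr M X"
  using assms(2)
proof (induction n arbitrary: X)
  case 0 then show ?case using assms(1) by simp
next
  case (Suc n)
  show ?case
  proof
    fix v assume "v \<in> chain C M M0 (Suc n) X"
    then consider "v \<in> chain C M M0 n X" | \<tau> where "\<exists>es. realizes C M \<tau> es"
      "\<exists>i<length (fst \<tau>). fst \<tau> ! i = X \<and> (SOME es. realizes C M \<tau> es) ! i = v"
      unfolding chain.simps step_def by blast
    then show "v \<in> carr M X"
    proof cases
      case 1 then show ?thesis using Suc by blast
    next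
      case 2
      then have r: "realizes C M \<tau> (SOME es. realizes C M \<tau> es)" by (metis someI_ex)
      from 2 obtain i where "i < length (fst \<tau>)" "fst \<tau> ! i = X" "(SOME es. realizes C M \<tau> es) ! i = v" by blast
      with r realizes_carr show ?thesis by blast
    qed
  qed
qed

lemma finite_max_index:
  fixes P :: "'a \<Rightarrow> nat \<Rightarrow> bool"
  assumes "finite J" "\<forall>i\<in>J. \<exists>n. P i n" "\<And>i n n'. P i n \<Longrightarrow> n \<le> n' \<Longrightarrow> P i n'"
  shows "\<exists>N. \<forall>i\<in>J. P i N"
  using assms(1,2)
proof (induction J rule: finite_induct)
  case empty then show ?case by simp
next
  case (insert j J)
  then obtain N where N: "\<forall>i\<in>J. P i N" by blast
  from insert obtain n where n: "P j n" by blast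
  show ?case
  proof (rule exI[of _ "max N n"], intro ballI)
    fix i assume "i \<in> insert j J"
    then show "P i (max N n)"
    proof -
      have "N \<le> max N n" "n \<le> max N n" by simp_all
      then show ?thesis using \<open>i \<in> insert j J\<close> N n assms(3)[of i N "max N n"] assms(3)[of j n "max N n"] by blast
    qed
  qed
qed

lemma realizes_params:
  "realizes C M (objs, params, adds, acts) vs \<longleftrightarrow>
     realizes C M (objs, replicate (length objs) None, adds, acts) vs \<and> length params = length objs \<and>
     (\<forall>i<length objs. \<forall>v. params!i = Some v \<longrightarrow> vs!i = v)"
  unfolding realizes_def by auto

lemma pure_list:
  assumes r: "realizes C M (objs, replicate (length objs) None, adds, acts) vs"
  shows "\<exists>vs'. realizes C M (objs, replicate (length objs) None, adds, acts) vs' \<and>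
     (\<forall>i<length objs. vs'!i \<in> Mp C M M0 (objs!i) \<and> (vs!i \<in> Mp C M M0 (objs!i) \<longrightarrow> vs'!i = vs!i))"
proof -
  let ?len = "length objs"
  define J where "J = {i. i < ?len \<and> vs!i \<in> Mp C M M0 (objs!i)}"
  have fJ: "finite J" unfolding J_def by auto
  have exJ: "\<forall>i\<in>J. \<exists>n. vs!i \<in> chain C M M0 n (objs!i)" unfolding J_def Mp_def by blast
  have monoJ: "\<And>i n n'. vs!i \<in> chain C M M0 n (objs!i) \<Longrightarrow> n \<le> n' \<Longrightarrow> vs!i \<in> chain C M M0 n' (objs!i)"
    using chain_mono by (metis subsetD)
  have "\<exists>N. \<forall>i\<in>J. vs!i \<in> chain C M M0 N (objs!i)"
    by (rule finite_max_index[OF fJ exJ], erule monoJ, assumption)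
  then obtain N where N: "\<forall>i\<in>J. vs!i \<in> chain C M M0 N (objs!i)" by blast
  define params where "params = map (\<lambda>i. if i \<in> J then Some (vs!i) else None) [0..<?len]"
  have lp: "length params = ?len" by (simp add: params_def)
  have pari: "params!i = (if i \<in> J then Some (vs!i) else None)" if "i < ?len" for i
    using that by (simp add: params_def)
  define \<tau> where "\<tau> = (objs, params, adds, acts)"
  have fst\<tau>: "fst \<tau> = objs" by (simp add: \<tau>_def)
  have objsOb: "set objs \<subseteq> Ob C" using r by (auto simp: realizes_def in_set_conv_nth)
  have rt: "realizes C M \<tau> vs"
    unfolding \<tau>_def by (rule realizes_params[THEN iffD2]) (use r lp pari in \<open>auto simp: J_def\<close>)
  have tt: "\<tau> \<in> types_over C (chain C M M0 N)"
  proof -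
    have "set params \<subseteq> insert None (Some ` (\<Union>X\<in>Ob C. chain C M M0 N X))"
    proof
      fix p assume "p \<in> set params"
      then obtain i where i: "i < ?len" "p = params!i" using lp by (metis in_set_conv_nth)
      show "p \<in> insert None (Some ` (\<Union>X\<in>Ob C. chain C M M0 N X))"
      proof (cases "i \<in> J")
        case True
        then have "vs!i \<in> chain C M M0 N (objs!i)" "objs!i \<in> Ob C" using N objsOb i by auto
        then show ?thesis using i pari True by auto
      qed (use i pari in auto)
    qed
    moreover have "set acts \<subseteq> Mor C \<times> UNIV"
    proof
      fix x assume "x \<in> set acts"
      obtain f a b where xe: "x = (f,a,b)" by (cases x) auto
      with \<open>x \<in> set acts\<close> have "(f,a,b) \<in> set acts" by simp
      have "\<forall>(f,i,l)\<in>set acts. f \<in> Hom C (objs!l) (objs!i)"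
        using r unfolding realizes_def by fastforce
      with xe \<open>(f,a,b) \<in> set acts\<close> show "x \<in> Mor C \<times> UNIV" by (auto simp: Hom_def)
    qed
    ultimately show ?thesis using objsOb by (simp add: types_over_def \<tau>_def)
  qed
  define vs' where "vs' = (SOME es. realizes C M \<tau> es)"
  have rt': "realizes C M \<tau> vs'" unfolding vs'_def using rt by (metis someI_ex)
  have inM: "vs'!i \<in> Mp C M M0 (objs!i)" if "i < ?len" for i
  proof -
    have "\<exists>\<tau>'\<in>types_over C (chain C M M0 N). (\<exists>es. realizes C M \<tau>' es) \<and>
      (\<exists>i'<length (fst \<tau>'). fst \<tau>' ! i' = objs!i \<and> (SOME es. realizes C M \<tau>' es) ! i' = vs'!i)"
      using tt rt that fst\<tau> unfolding vs'_def by blast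
    then have "vs'!i \<in> step C M (chain C M M0 N) (objs!i)"
      unfolding step_def by blast
    then show ?thesis using chain_Mp[of C M M0 "Suc N"] by auto
  qed
  have rt'': "realizes C M (objs, replicate ?len None, adds, acts) vs'"
    and pv: "\<forall>i<?len. \<forall>v. params!i = Some v \<longrightarrow> vs'!i = v"
    using rt'[unfolded \<tau>_def, THEN realizes_params[THEN iffD1]] by auto
  have fix': "vs'!i = vs!i" if "i < ?len" "vs!i \<in> Mp C M M0 (objs!i)" for i
  proof -
    have "params!i = Some (vs!i)" using that pari by (simp add: J_def)
    then show ?thesis using pv that(1) by blast
  qed
  show ?thesis using rt'' inM fix' by blast
qed


context includes cardinal_syntax
begin

context
  fixes K :: "'x set"
  assumes infK: "infinite K"
begin

lemma le_Un: "|A| \<le>o |K| \<Longrightarrow> |B| \<le>o |K| \<Longrightarrow> |A \<union> B| \<le>o |K|"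
  using card_of_Un_ordLeq_infinite_Field[of "|K|" A B] infK
  by (simp add: Field_card_of card_of_Card_order card_of_card_order_on)

lemma le_Times: "|A| \<le>o |K| \<Longrightarrow> |B| \<le>o |K| \<Longrightarrow> |A \<times> B| \<le>o |K|"
  using card_of_Times_ordLeq_infinite_Field[of "|K|" A B] infK
  by (simp add: Field_card_of card_of_Card_order card_of_card_order_on)

lemma le_UN: "|I| \<le>o |K| \<Longrightarrow> (\<And>i. i \<in> I \<Longrightarrow> |A i| \<le>o |K| ) \<Longrightarrow> |\<Union>i\<in>I. A i| \<le>o |K|"
  by (rule card_of_UNION_ordLeq_infinite[OF infK]) auto

lemma le_finite: "finite A \<Longrightarrow> |A| \<le>o |K|"
proof -
  assume fA: "finite A"
  have "|A| \<le>o |K| \<or> |K| \<le>o |A|" by (rule ordLeq_total[OF card_of_Well_order card_of_Well_order])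
  then show ?thesis
  proof
    assume "|K| \<le>o |A|"
    then have "finite K" by (rule card_of_ordLeq_finite[OF _ fA])
    then show ?thesis using infK by simp
  qed
qed

lemma le_sub: "A \<subseteq> B \<Longrightarrow> |B| \<le>o |K| \<Longrightarrow> |A| \<le>o |K|"
  by (rule ordLeq_transitive[OF card_of_mono1])

lemma le_image: "|A| \<le>o |K| \<Longrightarrow> |f ` A| \<le>o |K|"
  by (rule ordLeq_transitive[OF card_of_image])

lemma le_nat: "|UNIV :: nat set| \<le>o |K|"
  using infinite_iff_card_of_nat[THEN iffD1, OF infK] .

lemma le_lists: assumes "|S| \<le>o |K|" shows "|lists S| \<le>o |K|"
proof -
  define L where "L n = {l. l \<in> lists S \<and> length l = n}" for n
  have "|L n| \<le>o |K|" for n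
  proof (induction n)
    case 0
    have "L 0 = {[]}" by (auto simp: L_def)
    then show ?case by (simp add: le_finite)
  next
    case (Suc n)
    have "L (Suc n) \<subseteq> (\<lambda>(x,l). x # l) ` (S \<times> L n)"
    proof
      fix l assume "l \<in> L (Suc n)"
      then obtain x l' where "l = x # l'" "x \<in> S" "l' \<in> L n"
        by (cases l) (auto simp: L_def)
      then show "l \<in> (\<lambda>(x,l). x # l) ` (S \<times> L n)" by force
    qed
    moreover have "|(\<lambda>(x,l). x # l) ` (S \<times> L n)| \<le>o |K|"
      by (rule le_image, rule le_Times) (use assms Suc in auto)
    ultimately show ?case using le_sub by blast
  qed
  moreover have "lists S = (\<Union>n\<in>UNIV. L n)" by (auto simp: L_def)
  ultimately show ?thesis using le_UN[OF le_nat, of L] by simp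
qed

end

lemma Ob_le_Mor:
  assumes "klinear_category C"
  shows "|Ob C| \<le>o |Mor C|"
proof -
  have "inj_on (cid C) (Ob C) \<and> cid C ` Ob C \<subseteq> Mor C"
    using assms unfolding klinear_category_def inj_on_def Hom_def by (metis (mono_tags, lifting) image_subsetI mem_Collect_eq)
  then show ?thesis using card_of_ordLeq by blast
qed

lemma types_over_sub:
  "types_over C A \<subseteq> lists (Ob C) \<times> lists (insert None (Some ` (\<Union>X\<in>Ob C. A X))) \<times>
     lists (UNIV :: (nat\<times>nat\<times>nat) set) \<times> lists (Mor C \<times> (UNIV :: (nat\<times>nat) set))"
  unfolding types_over_def by auto

lemma step_sub:
  "psh_size C (step C M A) \<subseteq> psh_size C A \<union>
     (\<Union>\<tau>\<in>types_over C A. (\<lambda>i. (fst \<tau> ! i, (SOME es. realizes C M \<tau> es) ! i)) ` {..<length (fst \<tau>)})"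
proof
  fix p assume "p \<in> psh_size C (step C M A)"
  then obtain X v where p: "p = (X,v)" "X \<in> Ob C" "v \<in> step C M A X" by (auto simp: psh_size_def)
  from p(3) consider "v \<in> A X" | \<tau> i where "\<tau> \<in> types_over C A" "i < length (fst \<tau>)" "fst \<tau> ! i = X"
     "(SOME es. realizes C M \<tau> es) ! i = v"
    unfolding step_def by blast
  then show "p \<in> psh_size C A \<union>
     (\<Union>\<tau>\<in>types_over C A. (\<lambda>i. (fst \<tau> ! i, (SOME es. realizes C M \<tau> es) ! i)) ` {..<length (fst \<tau>)})"
  proof cases
    case 1 then show ?thesis using p by (auto simp: psh_size_def)
  next
    case 2 then show ?thesis using p by blast
  qed
qed

lemma chain_card:
  assumes infK: "infinite K" and C: "klinear_category C"
    and M0K: "|psh_size C M0| \<le>o |K|" and MorK: "|Mor C| \<le>o |K|"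
  shows "|psh_size C (chain C M M0 n)| \<le>o |K|"
proof (induction n)
  case 0 then show ?case using M0K by simp
next
  case (Suc n)
  let ?A = "chain C M M0 n"
  have ObK: "|Ob C| \<le>o |K|" using Ob_le_Mor[OF C] MorK ordLeq_transitive by blast
  have "(\<Union>X\<in>Ob C. ?A X) = snd ` psh_size C ?A" by (force simp: psh_size_def)
  then have UK: "|\<Union>X\<in>Ob C. ?A X| \<le>o |K|" using le_image[OF infK Suc] by simp
  have PK: "|insert None (Some ` (\<Union>X\<in>Ob C. ?A X))| \<le>o |K|"
    using le_Un[OF infK le_finite[OF infK, of "{None}"] le_image[OF infK UK, of Some]] by simp
  have NK: "|UNIV :: (nat\<times>nat\<times>nat) set| \<le>o |K|"
    using le_Times[OF infK le_nat[OF infK] le_Times[OF infK le_nat[OF infK] le_nat[OF infK]]]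
    by (simp add: UNIV_Times_UNIV[symmetric] del: UNIV_Times_UNIV)
  have N2K: "|UNIV :: (nat\<times>nat) set| \<le>o |K|"
    using le_Times[OF infK le_nat[OF infK] le_nat[OF infK]]
    by (simp add: UNIV_Times_UNIV[symmetric] del: UNIV_Times_UNIV)
  have TK: "|types_over C ?A| \<le>o |K|"
    apply (rule le_sub[OF infK types_over_sub])
    apply (intro le_Times[OF infK] le_lists[OF infK])
    using ObK PK NK MorK N2K by auto
  have "|psh_size C ?A \<union>
     (\<Union>\<tau>\<in>types_over C ?A. (\<lambda>i. (fst \<tau> ! i, (SOME es. realizes C M \<tau> es) ! i)) ` {..<length (fst \<tau>)})| \<le>o |K|"
    by (intro le_Un[OF infK] Suc le_UN[OF infK] TK le_finite[OF infK]) auto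
  then show ?case using le_sub[OF infK step_sub] by simp
qed

lemma Mp_card:
  assumes infK: "infinite K" and C: "klinear_category C"
    and M0K: "|psh_size C M0| \<le>o |K|" and MorK: "|Mor C| \<le>o |K|"
  shows "|psh_size C (Mp C M M0)| \<le>o |K|"
proof -
  have "psh_size C (Mp C M M0) = (\<Union>n\<in>UNIV. psh_size C (chain C M M0 n))"
    by (auto simp: psh_size_def Mp_def)
  then show ?thesis using le_UN[OF infK le_nat[OF infK]] chain_card[OF assms] by metis
qed


end


lemma ksm_cat: "klinear_symmetric_monoidal C \<Longrightarrow> klinear_category C"
  by (simp add: klinear_symmetric_monoidal_def Let_def)

lemma psh_vs: "presheaf C M \<Longrightarrow> X \<in> Ob C \<Longrightarrow> vs_on (carr M X) (padd M X) (pscale M X) (pzero M X)"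
  by (simp add: presheaf_def)

lemma psh_add: "presheaf C M \<Longrightarrow> X \<in> Ob C \<Longrightarrow> m \<in> carr M X \<Longrightarrow> m' \<in> carr M X \<Longrightarrow> padd M X m m' \<in> carr M X"
  by (drule (1) psh_vs) (simp add: vs_on_def)

lemma psh_scale: "presheaf C M \<Longrightarrow> X \<in> Ob C \<Longrightarrow> m \<in> carr M X \<Longrightarrow> pscale M X a m \<in> carr M X"
  by (drule (1) psh_vs) (simp add: vs_on_def)

lemma psh_act: "presheaf C M \<Longrightarrow> X \<in> Ob C \<Longrightarrow> Y \<in> Ob C \<Longrightarrow> f \<in> Hom C X Y \<Longrightarrow> m \<in> carr M Y \<Longrightarrow> act M f m \<in> carr M X"
  unfolding presheaf_def by blast

lemma Hom_Ob: "klinear_category C \<Longrightarrow> f \<in> Hom C X Y \<Longrightarrow> X \<in> Ob C \<and> Y \<in> Ob C"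
  unfolding klinear_category_def Hom_def by auto

lemma cid_hom: "klinear_category C \<Longrightarrow> X \<in> Ob C \<Longrightarrow> cid C X \<in> Hom C X X"
  by (simp add: klinear_category_def)

lemma hom_vs: "klinear_category C \<Longrightarrow> X \<in> Ob C \<Longrightarrow> Y \<in> Ob C \<Longrightarrow> vs_on (Hom C X Y) (hadd C) (hscale C) (hzero C X Y)"
  by (simp add: klinear_category_def)

lemma scal_hom: "klinear_category C \<Longrightarrow> X \<in> Ob C \<Longrightarrow> hscale C a (cid C X) \<in> Hom C X X"
  using hom_vs[of C X X] cid_hom[of C X] by (simp add: vs_on_def)

lemma scal_act: "klinear_category C \<Longrightarrow> presheaf C M \<Longrightarrow> X \<in> Ob C \<Longrightarrow> m \<in> carr M X \<Longrightarrow>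
   act M (hscale C a (cid C X)) m = pscale M X a m"
proof -
  assume C: "klinear_category C" and P: "presheaf C M" and X: "X \<in> Ob C" and m: "m \<in> carr M X"
  have ci: "cid C X \<in> Hom C X X" using cid_hom[OF C X] .
  have "act M (hscale C a (cid C X)) m = pscale M X a (act M (cid C X) m)"
    using P X ci m unfolding presheaf_def by blast
  also have "act M (cid C X) m = m" using P X m unfolding presheaf_def by blast
  finally show ?thesis .
qed

lemma Mp_carr:
  assumes "sub_presheaf C M M0" "X \<in> Ob C"
  shows "Mp C M M0 X \<subseteq> carr M X"
proof -
  have "\<forall>X\<in>Ob C. M0 X \<subseteq> carr M X" using assms(1) by (simp add: sub_presheaf_def)
  then show ?thesis using chain_carr[of C M0 M X] assms(2) unfolding Mp_def by blast
qed

lemma Mp_add: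
  assumes P: "presheaf C M" and S: "sub_presheaf C M M0" and X: "X \<in> Ob C"
    and m: "m \<in> Mp C M M0 X" and m': "m' \<in> Mp C M M0 X"
  shows "padd M X m m' \<in> Mp C M M0 X"
proof -
  have mc: "m \<in> carr M X" "m' \<in> carr M X" using Mp_carr[OF S X] m m' by auto
  have "realizes C M ([X,X,X], replicate (length [X,X,X]) None, [(0,1,2)], []) [m, m', padd M X m m']"
    using mc X psh_add[OF P X mc] by (auto simp: realizes_def less_Suc_eq numeral_3_eq_3)
  from pure_list[OF this, of M0] obtain vs' where
    r: "realizes C M ([X,X,X], replicate (length [X,X,X]) None, [(0,1,2)], []) vs'" and
    v: "\<forall>i<length [X,X,X]. vs'!i \<in> Mp C M M0 ([X,X,X]!i) \<and> ([m, m', padd M X m m']!i \<in> Mp C M M0 ([X,X,X]!i) \<longrightarrow> vs'!i = [m, m', padd M X m m']!i)"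
    by blast
  have "padd M X (vs'!0) (vs'!1) = vs'!2" using r by (simp add: realizes_def)
  moreover have "vs'!0 = m" "vs'!1 = m'" "vs'!2 \<in> Mp C M M0 X"
    using v[rule_format, of 0] v[rule_format, of 1] v[rule_format, of 2] m m' by simp_all
  ultimately show ?thesis by simp
qed

lemma Mp_act:
  assumes P: "presheaf C M" and S: "sub_presheaf C M M0" and X: "X \<in> Ob C" and Y: "Y \<in> Ob C"
    and f: "f \<in> Hom C X Y" and m: "m \<in> Mp C M M0 Y"
  shows "act M f m \<in> Mp C M M0 X"
proof -
  have mc: "m \<in> carr M Y" using Mp_carr[OF S Y] m by auto
  have "realizes C M ([Y,X], replicate (length [Y,X]) None, [], [(f,0,1)]) [m, act M f m]"
    using mc X Y f psh_act[OF P X Y f mc] by (auto simp: realizes_def less_Suc_eq)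
  from pure_list[OF this, of M0] obtain vs' where
    r: "realizes C M ([Y,X], replicate (length [Y,X]) None, [], [(f,0,1)]) vs'" and
    v: "\<forall>i<length [Y,X]. vs'!i \<in> Mp C M M0 ([Y,X]!i) \<and> ([m, act M f m]!i \<in> Mp C M M0 ([Y,X]!i) \<longrightarrow> vs'!i = [m, act M f m]!i)"
    by blast
  have "act M f (vs'!0) = vs'!1" using r by (simp add: realizes_def)
  moreover have "vs'!0 = m" "vs'!1 \<in> Mp C M M0 X"
    using v[rule_format, of 0] v[rule_format, of 1] m by simp_all
  ultimately show ?thesis by simp
qed

lemma Mp_sub:
  assumes C: "klinear_category C" and P: "presheaf C M" and S: "sub_presheaf C M M0"
  shows "sub_presheaf C M (Mp C M M0)"
  unfolding sub_presheaf_def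
proof (intro conjI ballI allI)
  fix X assume X: "X \<in> Ob C"
  show "Mp C M M0 X \<subseteq> carr M X" by (rule Mp_carr[OF S X])
  show "pzero M X \<in> Mp C M M0 X"
    using S X chain_Mp[of C M M0 0 X] by (auto simp: sub_presheaf_def)
  show "padd M X m m' \<in> Mp C M M0 X" if "m \<in> Mp C M M0 X" "m' \<in> Mp C M M0 X" for m m'
    using Mp_add[OF P S X that] .
  show "pscale M X k m \<in> Mp C M M0 X" if "m \<in> Mp C M M0 X" for k m
  proof -
    have "m \<in> carr M X" using Mp_carr[OF S X] that by auto
    then have "pscale M X k m = act M (hscale C k (cid C X)) m" using scal_act[OF C P X] by simp
    then show ?thesis using Mp_act[OF P S X X scal_hom[OF C X] that] by simp
  qed
next
  fix X Y f m assume "X \<in> Ob C" "Y \<in> Ob C" "f \<in> Hom C X Y" "m \<in> Mp C M M0 Y"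
  then show "act M f m \<in> Mp C M M0 X" using Mp_act[OF P S] by blast
qed


lemma pure_set:
  assumes fE: "finite E" and EM: "E \<subseteq> Sigma (Ob C) (carr M)"
    and fA: "finite FA" and FA_ok: "\<And>X m m'. (X,m,m') \<in> FA \<Longrightarrow> (X,m) \<in> E \<and> (X,m') \<in> E \<and> (X, padd M X m m') \<in> E"
    and fT: "finite FT" and FT_ok: "\<And>f X Y m. (f,X,Y,m) \<in> FT \<Longrightarrow> f \<in> Hom C X Y \<and> (Y,m) \<in> E \<and> (X, act M f m) \<in> E"
  shows "\<exists>\<sigma>. (\<forall>X m. (X,m) \<in> E \<longrightarrow> \<sigma> X m \<in> Mp C M M0 X) \<and> (\<forall>X m. m \<in> Mp C M M0 X \<longrightarrow> \<sigma> X m = m) \<and>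
     (\<forall>X m m'. (X,m,m') \<in> FA \<longrightarrow> \<sigma> X (padd M X m m') = padd M X (\<sigma> X m) (\<sigma> X m')) \<and>
     (\<forall>f X Y m. (f,X,Y,m) \<in> FT \<longrightarrow> \<sigma> X (act M f m) = act M f (\<sigma> Y m))"
proof -
  obtain es where es: "set es = E" using finite_list[OF fE] by blast
  obtain la where la: "set la = FA" using finite_list[OF fA] by blast
  obtain lt where lt: "set lt = FT" using finite_list[OF fT] by blast
  define idx where "idx p = (SOME i. i < length es \<and> es!i = p)" for p
  have idx: "idx p < length es \<and> es!(idx p) = p" if "p \<in> E" for p
  proof -
    have "\<exists>i. i < length es \<and> es!i = p" using that es by (auto simp: in_set_conv_nth)
    then show ?thesis unfolding idx_def by (rule someI_ex)
  qed
  define objs where "objs = map fst es"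
  define vs where "vs = map snd es"
  define adds where "adds = map (\<lambda>(X,m,m'). (idx (X,m), idx (X,m'), idx (X, padd M X m m'))) la"
  define acts where "acts = map (\<lambda>(f,X,Y,m). (f, idx (Y,m), idx (X, act M f m))) lt"
  have lo: "length objs = length es" "length vs = length es" by (simp_all add: objs_def vs_def)
  have oi: "objs!(idx p) = fst p" "vs!(idx p) = snd p" if "p \<in> E" for p
    using idx[OF that] by (simp_all add: objs_def vs_def)
  have r: "realizes C M (objs, replicate (length objs) None, adds, acts) vs"
    unfolding realizes_def
  proof (simp only: prod.case, intro conjI)
    show "length vs = length objs" using lo by simp
    show "length (replicate (length objs) (None :: 'b option)) = length objs" by simp
    show "\<forall>i<length objs. objs ! i \<in> Ob C \<and> vs ! i \<in> carr M (objs ! i) \<and>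
        (\<forall>v. replicate (length objs) None ! i = Some v \<longrightarrow> vs ! i = v)"
    proof (intro allI impI)
      fix i assume i: "i < length objs"
      then have "es!i \<in> E" using es lo by auto
      then have "es!i \<in> Sigma (Ob C) (carr M)" using EM by auto
      then show "objs ! i \<in> Ob C \<and> vs ! i \<in> carr M (objs ! i) \<and>
        (\<forall>v. replicate (length objs) None ! i = Some v \<longrightarrow> vs ! i = v)"
        using i lo by (auto simp: objs_def vs_def)
    qed
    show "\<forall>(i,j,l)\<in>set adds. i < length objs \<and> j < length objs \<and> l < length objs \<and>
        objs!j = objs!i \<and> objs!l = objs!i \<and> padd M (objs!i) (vs!i) (vs!j) = vs!l"
    proof
      fix x assume "x \<in> set adds"
      then obtain X m m' where xm: "(X,m,m') \<in> FA" "x = (idx (X,m), idx (X,m'), idx (X, padd M X m m'))"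
        unfolding adds_def using la by auto
      from FA_ok[OF xm(1)] have "(X,m) \<in> E" "(X,m') \<in> E" "(X, padd M X m m') \<in> E" by auto
      then show "case x of (i,j,l) \<Rightarrow> i < length objs \<and> j < length objs \<and> l < length objs \<and>
        objs!j = objs!i \<and> objs!l = objs!i \<and> padd M (objs!i) (vs!i) (vs!j) = vs!l"
        using xm(2) idx oi lo by auto
    qed
    show "\<forall>(f,i,l)\<in>set acts. i < length objs \<and> l < length objs \<and> f \<in> Hom C (objs!l) (objs!i) \<and>
        act M f (vs!i) = vs!l"
    proof
      fix x assume "x \<in> set acts"
      then obtain f X Y m where xm: "(f,X,Y,m) \<in> FT" "x = (f, idx (Y,m), idx (X, act M f m))"
        unfolding acts_def using lt by auto
      from FT_ok[OF xm(1)] have "f \<in> Hom C X Y" "(Y,m) \<in> E" "(X, act M f m) \<in> E" by auto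
      then show "case x of (f,i,l) \<Rightarrow> i < length objs \<and> l < length objs \<and> f \<in> Hom C (objs!l) (objs!i) \<and>
        act M f (vs!i) = vs!l"
        using xm(2) idx oi lo by auto
    qed
  qed
  from pure_list[OF r, of M0] obtain vs' where
    r': "realizes C M (objs, replicate (length objs) None, adds, acts) vs'" and
    v': "\<forall>i<length objs. vs'!i \<in> Mp C M M0 (objs!i) \<and> (vs!i \<in> Mp C M M0 (objs!i) \<longrightarrow> vs'!i = vs!i)"
    by blast
  define \<sigma> where "\<sigma> X m = (if (X,m) \<in> E then vs' ! idx (X,m) else m)" for X m
  have sE: "\<sigma> X m = vs' ! idx (X,m)" "vs' ! idx (X,m) \<in> Mp C M M0 X"
       "m \<in> Mp C M M0 X \<longrightarrow> vs' ! idx (X,m) = m" if "(X,m) \<in> E" for X m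
    using that v'[rule_format, of "idx (X,m)"] idx[OF that] oi[OF that] lo by (auto simp: \<sigma>_def)
  have addsr: "\<forall>(i,j,l)\<in>set adds. padd M (objs!i) (vs'!i) (vs'!j) = vs'!l"
    using r' unfolding realizes_def by fastforce
  have actsr: "\<forall>(f,i,l)\<in>set acts. act M f (vs'!i) = vs'!l"
    using r' unfolding realizes_def by fastforce
  show ?thesis
  proof (rule exI[of _ \<sigma>], intro conjI allI impI)
    fix X m assume "(X,m) \<in> E" then show "\<sigma> X m \<in> Mp C M M0 X" using sE by simp
  next
    fix X m assume "m \<in> Mp C M M0 X" then show "\<sigma> X m = m" using sE by (cases "(X,m) \<in> E") (auto simp: \<sigma>_def)
  next
    fix X m m' assume a: "(X,m,m') \<in> FA"
    then have E3: "(X,m) \<in> E" "(X,m') \<in> E" "(X, padd M X m m') \<in> E" using FA_ok by auto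
    have "(idx (X,m), idx (X,m'), idx (X, padd M X m m')) \<in> set adds"
      using a la unfolding adds_def by force
    then have "padd M (objs ! idx (X,m)) (vs' ! idx (X,m)) (vs' ! idx (X,m')) = vs' ! idx (X, padd M X m m')"
      using addsr by fastforce
    then show "\<sigma> X (padd M X m m') = padd M X (\<sigma> X m) (\<sigma> X m')"
      using E3 sE oi by simp
  next
    fix f X Y m assume a: "(f,X,Y,m) \<in> FT"
    then have E3: "(Y,m) \<in> E" "(X, act M f m) \<in> E" using FT_ok by auto
    have "(f, idx (Y,m), idx (X, act M f m)) \<in> set acts"
      using a lt unfolding acts_def by force
    then have "act M f (vs' ! idx (Y,m)) = vs' ! idx (X, act M f m)"
      using actsr by fastforce
    then show "\<sigma> X (act M f m) = act M f (\<sigma> Y m)"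
      using E3 sE by simp
  qed
qed


fun fa_of :: "('o,'m,'v,'w,'k) desc \<Rightarrow> ('o \<times> 'v \<times> 'v) set" where
  "fa_of (DM X Y f m m' n) = {(X,m,m')}"
| "fa_of _ = {}"

fun ft_of :: "('o,'m,'k::field) smcat \<Rightarrow> ('o,'m,'v,'w,'k) desc \<Rightarrow> ('m \<times> 'o \<times> 'o \<times> 'v) set" where
  "ft_of C (DMS X Y f m n a) = {(hscale C a (cid C X), X, X, m)}"
| "ft_of C (DC X Y X' Y' a b f m' n') = {(a, X, X', m')}"
| "ft_of C _ = {}"

lemma finite_elems: "finite (elems M d)" by (cases d) auto
lemma finite_fa: "finite (fa_of d)" by (cases d) auto
lemma finite_ft: "finite (ft_of C d)" by (cases d) auto

lemma elems_ok:
  assumes C: "klinear_category C" and P: "presheaf C M" and v: "valid C (carr M) N U d"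
  shows "elems M d \<subseteq> Sigma (Ob C) (carr M)"
  using v
proof (cases d)
  case (DM X Y f m m' n)
  then show ?thesis using v psh_add[OF P, of X m m'] by (auto simp: day_gen_def)
next
  case (DMS X Y f m n a)
  then show ?thesis using v psh_scale[OF P, of X m a] by (auto simp: day_gen_def)
next
  case (DC X Y X' Y' a b f m' n')
  then show ?thesis using v psh_act[OF P, of X X' a m'] by auto
qed (auto simp: day_gen_def)

lemma fa_ok:
  "(X,m,m') \<in> fa_of d \<Longrightarrow> (X,m) \<in> elems M d \<and> (X,m') \<in> elems M d \<and> (X, padd M X m m') \<in> elems M d"
  by (cases d) auto

lemma ft_ok:
  assumes C: "klinear_category C" and P: "presheaf C M" and v: "valid C (carr M) N U d"
    and t: "(f,X,Y,m) \<in> ft_of C d"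
  shows "f \<in> Hom C X Y \<and> (Y,m) \<in> elems M d \<and> (X, act M f m) \<in> elems M d"
proof (cases d)
  case (DMS X0 Y0 f0 m0 n0 a0)
  with t have e: "f = hscale C a0 (cid C X0)" "X = X0" "Y = X0" "m = m0" by auto
  have X0: "X0 \<in> Ob C" "m0 \<in> carr M X0" using v DMS by (auto simp: day_gen_def)
  show ?thesis using e DMS scal_hom[OF C X0(1)] scal_act[OF C P X0] by auto
next
  case (DC X0 Y0 X0' Y0' a0 b0 f0 m0' n0')
  with t v show ?thesis by auto
qed (use t in auto)

lemma transfer:
  assumes C: "klinear_category C" and P: "presheaf C M" and S: "sub_presheaf C M M0"
    and cf: "c \<in> day_free C (Mp C M M0) N U" and cs: "c \<in> day_span C M (carr M) N U"
  shows "c \<in> day_span C M (Mp C M M0) N U"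
proof -
  let ?S = "Mp C M M0"
  from lspan_finite[OF day_span_lspan[OF cs]] obtain R where
    R: "finite R" "R \<subseteq> day_rels C M (carr M) N U" "c \<in> lspan R" by blast
  have Rsub: "R \<subseteq> rel_of C M N ` {d. valid C (carr M) N U d}"
  proof
    fix r assume "r \<in> R"
    then have "r \<in> day_rels C M (carr M) N U" using R(2) by (rule subsetD[rotated])
    then obtain d where dd: "valid C (carr M) N U d \<and> r = rel_of C M N d" using day_rels_desc by metis
    show "r \<in> rel_of C M N ` {d. valid C (carr M) N U d}"
      by (rule image_eqI[of _ _ d]) (use dd in auto)
  qed
  then obtain D where D: "D \<subseteq> {d. valid C (carr M) N U d}" "finite D" "R = rel_of C M N ` D"
    using finite_subset_image[OF R(1) Rsub] by blast
  define E where "E = (\<Union>d\<in>D. elems M d)"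
  define FA where "FA = (\<Union>d\<in>D. fa_of d)"
  define FT where "FT = (\<Union>d\<in>D. ft_of C d)"
  have "\<exists>\<sigma>. (\<forall>X m. (X,m) \<in> E \<longrightarrow> \<sigma> X m \<in> ?S X) \<and> (\<forall>X m. m \<in> ?S X \<longrightarrow> \<sigma> X m = m) \<and>
     (\<forall>X m m'. (X,m,m') \<in> FA \<longrightarrow> \<sigma> X (padd M X m m') = padd M X (\<sigma> X m) (\<sigma> X m')) \<and>
     (\<forall>f X Y m. (f,X,Y,m) \<in> FT \<longrightarrow> \<sigma> X (act M f m) = act M f (\<sigma> Y m))"
  proof (rule pure_set)
    show "finite E" unfolding E_def by (rule finite_UN_I[OF D(2)]) (rule finite_elems)
    show "E \<subseteq> Sigma (Ob C) (carr M)" unfolding E_def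
    proof (rule UN_least)
      fix d assume "d \<in> D"
      then have "valid C (carr M) N U d" using D(1) by auto
      then show "elems M d \<subseteq> Sigma (Ob C) (carr M)" by (rule elems_ok[OF C P])
    qed
    show "finite FA" unfolding FA_def by (rule finite_UN_I[OF D(2)]) (rule finite_fa)
    show "finite FT" unfolding FT_def by (rule finite_UN_I[OF D(2)]) (rule finite_ft)
    show "(X,m) \<in> E \<and> (X,m') \<in> E \<and> (X, padd M X m m') \<in> E" if "(X,m,m') \<in> FA" for X m m'
    proof -
      from that obtain d where "d \<in> D" "(X,m,m') \<in> fa_of d" unfolding FA_def by blast
      with fa_ok[OF this(2), of M] show ?thesis unfolding E_def by blast
    qed
    show "f \<in> Hom C X Y \<and> (Y,m) \<in> E \<and> (X, act M f m) \<in> E" if "(f,X,Y,m) \<in> FT" for f X Y m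
    proof -
      from that obtain d where "d \<in> D" "(f,X,Y,m) \<in> ft_of C d" unfolding FT_def by blast
      moreover have "valid C (carr M) N U d" using D(1) \<open>d \<in> D\<close> by auto
      ultimately have "f \<in> Hom C X Y \<and> (Y,m) \<in> elems M d \<and> (X, act M f m) \<in> elems M d"
        using ft_ok[OF C P] by blast
      with \<open>d \<in> D\<close> show ?thesis unfolding E_def by blast
    qed
  qed
  then obtain \<sigma> where sp: "(\<forall>X m. (X,m) \<in> E \<longrightarrow> \<sigma> X m \<in> ?S X) \<and> (\<forall>X m. m \<in> ?S X \<longrightarrow> \<sigma> X m = m) \<and>
     (\<forall>X m m'. (X,m,m') \<in> FA \<longrightarrow> \<sigma> X (padd M X m m') = padd M X (\<sigma> X m) (\<sigma> X m')) \<and>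
     (\<forall>f X Y m. (f,X,Y,m) \<in> FT \<longrightarrow> \<sigma> X (act M f m) = act M f (\<sigma> Y m))" ..
  have s1: "\<And>X m. (X,m) \<in> E \<Longrightarrow> \<sigma> X m \<in> ?S X" using sp by blast
  have s2: "\<And>X m. m \<in> ?S X \<Longrightarrow> \<sigma> X m = m" using sp by blast
  have s3: "\<And>X m m'. (X,m,m') \<in> FA \<Longrightarrow> \<sigma> X (padd M X m m') = padd M X (\<sigma> X m) (\<sigma> X m')" using sp by blast
  have s4: "\<And>f X Y m. (f,X,Y,m) \<in> FT \<Longrightarrow> \<sigma> X (act M f m) = act M f (\<sigma> Y m)" using sp by blast
  have pr: "fs r \<and> push (phi \<sigma>) r \<in> lspan (day_rels C M ?S N U)" if "r \<in> R" for r
  proof -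
    from that D obtain d where d: "d \<in> D" "r = rel_of C M N d" "valid C (carr M) N U d" by auto
    have "push (phi \<sigma>) (rel_of C M N d) = rel_of C M N (mapd \<sigma> d)"
    proof (rule push_rel_of)
      fix X Y f m m' n assume "d = DM X Y f m m' n"
      then have "(X,m,m') \<in> FA" using d(1) unfolding FA_def by force
      then show "\<sigma> X (padd M X m m') = padd M X (\<sigma> X m) (\<sigma> X m')" by (rule s3)
    next
      fix X Y f m n a assume dd: "d = DMS X Y f m n a"
      then have t: "(hscale C a (cid C X), X, X, m) \<in> FT" using d(1) unfolding FT_def by force
      have X: "X \<in> Ob C" "m \<in> carr M X" using d(3) dd by (auto simp: day_gen_def)
      have "(X,m) \<in> E" using d(1) dd unfolding E_def by force
      then have sm: "\<sigma> X m \<in> carr M X" using s1 Mp_carr[OF S X(1)] by blast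
      show "\<sigma> X (pscale M X a m) = pscale M X a (\<sigma> X m)"
        using s4[OF t] scal_act[OF C P X] scal_act[OF C P X(1) sm] by simp
    next
      fix X Y X' Y' a b f m' n' assume "d = DC X Y X' Y' a b f m' n'"
      then have "(a, X, X', m') \<in> FT" using d(1) unfolding FT_def by force
      then show "\<sigma> X (act M a m') = act M a (\<sigma> X' m')" by (rule s4)
    qed
    moreover have "valid C ?S N U (mapd \<sigma> d)"
      by (rule valid_mapd[OF d(3)]) (use d(1) s1 in \<open>auto simp: E_def\<close>)
    ultimately show ?thesis using d(2) fs_rel_of[of C M N d] lspan.rel[OF desc_day_rels[of C ?S N U "mapd \<sigma> d" M]] by simp
  qed
  have "fs c \<and> push (phi \<sigma>) c \<in> lspan (day_rels C M ?S N U)"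
    by (rule lspan_push[OF R(3)]) (use pr in blast)
  moreover have "push (phi \<sigma>) c = c"
  proof (rule push_id_on)
    fix g assume "c g \<noteq> 0"
    then have "day_gen C ?S N U g" using cf unfolding day_free_def by blast
    then show "phi \<sigma> g = g" using s2 by (auto simp: phi_def day_gen_def split: prod.splits)
  qed
  ultimately show ?thesis using lspan_day_span[of c C M ?S N U] by simp
qed


lemma card_choice:
  fixes A :: "'a set" and B :: "'b set"
  assumes main: "\<And>(K::'a set). infinite K \<Longrightarrow> (card_of A, card_of K) \<in> ordLeq \<Longrightarrow> (card_of B, card_of K) \<in> ordLeq \<Longrightarrow> (card_of P, card_of K) \<in> ordLeq"
    and main2: "\<And>(K::'b set). infinite K \<Longrightarrow> (card_of A, card_of K) \<in> ordLeq \<Longrightarrow> (card_of B, card_of K) \<in> ordLeq \<Longrightarrow> (card_of P, card_of K) \<in> ordLeq"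
    and main3: "\<And>(K::nat set). infinite K \<Longrightarrow> (card_of A, card_of K) \<in> ordLeq \<Longrightarrow> (card_of B, card_of K) \<in> ordLeq \<Longrightarrow> (card_of P, card_of K) \<in> ordLeq"
  shows "(card_of P, card_of A) \<in> ordLeq \<or> (card_of P, card_of B) \<in> ordLeq \<or> (card_of P, card_of (UNIV :: nat set)) \<in> ordLeq"
proof -
  let ?N = "UNIV :: nat set"
  have tot: "\<And>(X::'x set) (Y::'y set). (card_of X, card_of Y) \<in> ordLeq \<or> (card_of Y, card_of X) \<in> ordLeq"
    by (rule ordLeq_total[OF card_of_Well_order card_of_Well_order])
  have refl: "\<And>(X::'x set). (card_of X, card_of X) \<in> ordLeq" by (rule card_of_mono1) simp
  have inf: "\<And>(X::'x set). (card_of ?N, card_of X) \<in> ordLeq \<Longrightarrow> infinite X"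
    using infinite_iff_card_of_nat by blast
  have trans: "\<And>(X::'x set) (Y::'y set) (Z::'z set). (card_of X, card_of Y) \<in> ordLeq \<Longrightarrow> (card_of Y, card_of Z) \<in> ordLeq \<Longrightarrow> (card_of X, card_of Z) \<in> ordLeq"
    by (rule ordLeq_transitive)
  consider "(card_of A, card_of B) \<in> ordLeq" | "(card_of B, card_of A) \<in> ordLeq" using tot by blast
  then show ?thesis
  proof cases
    case 1
    note AB = this
    consider "(card_of ?N, card_of B) \<in> ordLeq" | "(card_of B, card_of ?N) \<in> ordLeq" using tot by blast
    then show ?thesis
    proof cases
      case 1
      then show ?thesis using main2[OF inf[OF 1] AB refl] by blast
    next
      case 2
      have "(card_of A, card_of ?N) \<in> ordLeq" using trans[OF AB 2] .
      then show ?thesis using main3[of ?N] 2 by simp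
    qed
  next
    case 2
    note BA = this
    consider "(card_of ?N, card_of A) \<in> ordLeq" | "(card_of A, card_of ?N) \<in> ordLeq" using tot by blast
    then show ?thesis
    proof cases
      case 1
      then show ?thesis using main[OF inf[OF 1] refl BA] by blast
    next
      case 2
      have "(card_of B, card_of ?N) \<in> ordLeq" using trans[OF BA 2] .
      then show ?thesis using main3[of ?N] 2 by simp
    qed
  qed
qed

theorem proposition2p28:
  fixes C :: "('o,'m,'k::field) smcat"
    and M :: "('o,'m,'v,'k) psh"
    and N :: "('o,'m,'w,'k) psh"
    and M0 :: "'o \<Rightarrow> 'v set"
  assumes "klinear_symmetric_monoidal C"
    and "presheaf C M" and "presheaf C N"
    and "sub_presheaf C M M0"
  shows "\<exists>M'. sub_presheaf C M M' \<and> (\<forall>X\<in>Ob C. M0 X \<subseteq> M' X) \<and>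
           day_incl_mono C M M' N \<and>
           ((card_of (psh_size C M'), card_of (psh_size C M0)) \<in> ordLeq \<or>
            (card_of (psh_size C M'), card_of (Mor C)) \<in> ordLeq \<or>
            (card_of (psh_size C M'), card_of (UNIV :: nat set)) \<in> ordLeq)"
proof (intro exI conjI)
  have C: "klinear_category C" using assms(1) by (rule ksm_cat)
  show "sub_presheaf C M (Mp C M M0)" by (rule Mp_sub[OF C assms(2,4)])
  show "\<forall>X\<in>Ob C. M0 X \<subseteq> Mp C M M0 X" using chain_Mp[of C M M0 0] by simp
  show "day_incl_mono C M (Mp C M M0) N"
    unfolding day_incl_mono_def using transfer[OF C assms(2,4)] by blast
  show "(card_of (psh_size C (Mp C M M0)), card_of (psh_size C M0)) \<in> ordLeq \<or>
            (card_of (psh_size C (Mp C M M0)), card_of (Mor C)) \<in> ordLeq \<or>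
            (card_of (psh_size C (Mp C M M0)), card_of (UNIV :: nat set)) \<in> ordLeq"
    by (rule card_choice; rule Mp_card[OF _ C]; assumption)
qed


end
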